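(* Suppose the e-values are valid, i.e. $\mathbb{E}[e_t\mid\mathcal{F}_{t-1}]\le 1$ almost surely for every $t$ with $\theta_t=0$. Define the oracle e-value-based FDP estimate $$\mathrm{FDP}^*_{\mathrm{e}}(t)=\sum_{j\in\mathcal{H}_0(t)}\frac{\alpha_j}{R_{j-1}+1}.$$ Then for every $t\ge1$: if $\mathbb{E}[\mathrm{FDP}^*_{\mathrm{e}}(t)]\le\alpha$, then $\mathrm{FDR}(t)\le\alpha$.
   Context: Let $\alpha\in(0,1)$ be a target level. Hypotheses are indexed by $t=1,2,\dots$; $\theta_t\in\{0,1\}$ is a fixed (non-random) indicator with $\theta_t=0$ iff the $t$-th null hypothesis is true. $e_1,e_2,\dots$ are nonnegative random variables (e-values). Testing levels $\alpha_1,\alpha_2,\dots$ are nonnegative random variables and the decisions are $\delta_t=\mathbb{1}\{e_t\ge 1/\alpha_t\}$ (with $\delta_t=0$ when $\alpha_t=0$). Let $\mathcal{F}_t=\sigma(\delta_1,\dots,\delta_t)$, $\mathcal{F}_0$ trivial; each $\alpha_t$ is required to be $\mathcal{F}_{t-1}$-measurable. $R_t=\sum_{j=1}^t\delta_j$, $R_0=0$. $\mathcal{H}_0(t)=\{j\le t:\theta_j=0\}$. $\mathrm{FDR}(t)=\mathbb{E}\big[\sum_{j\in\mathcal{H}_0(t)}\delta_j/(R_t\vee 1)\big]$. *)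

theory Defs
  imports "HOL-Probability.Probability"
begin

definition decision :: "(nat \<Rightarrow> 'a \<Rightarrow> real) \<Rightarrow> (nat \<Rightarrow> 'a \<Rightarrow> real) \<Rightarrow> nat \<Rightarrow> 'a \<Rightarrow> bool" where
  "decision alpha e t x \<longleftrightarrow> alpha t x \<noteq> 0 \<and> e t x \<ge> 1 / alpha t x"

definition rejections :: "(nat \<Rightarrow> 'a \<Rightarrow> real) \<Rightarrow> (nat \<Rightarrow> 'a \<Rightarrow> real) \<Rightarrow> nat \<Rightarrow> 'a \<Rightarrow> nat" where
  "rejections alpha e t x = card {j \<in> {1..t}. decision alpha e j x}"

definition filt :: "'a measure \<Rightarrow> (nat \<Rightarrow> 'a \<Rightarrow> real) \<Rightarrow> (nat \<Rightarrow> 'a \<Rightarrow> real) \<Rightarrow> nat \<Rightarrow> 'a measure" where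
  "filt M alpha e t = sigma (space M) {{x \<in> space M. decision alpha e j x} | j. j \<in> {1..t}}"

definition nulls :: "(nat \<Rightarrow> nat) \<Rightarrow> nat \<Rightarrow> nat set" where
  "nulls theta t = {j \<in> {1..t}. theta j = 0}"

definition FDP :: "(nat \<Rightarrow> nat) \<Rightarrow> (nat \<Rightarrow> 'a \<Rightarrow> real) \<Rightarrow> (nat \<Rightarrow> 'a \<Rightarrow> real) \<Rightarrow> nat \<Rightarrow> 'a \<Rightarrow> real" where
  "FDP theta alpha e t x =
     (\<Sum>j\<in>nulls theta t. (if decision alpha e j x then 1 else 0)) / max (real (rejections alpha e t x)) 1"

definition FDR :: "'a measure \<Rightarrow> (nat \<Rightarrow> nat) \<Rightarrow> (nat \<Rightarrow> 'a \<Rightarrow> real) \<Rightarrow> (nat \<Rightarrow> 'a \<Rightarrow> real) \<Rightarrow> nat \<Rightarrow> real" where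
  "FDR M theta alpha e t = (\<integral>x. FDP theta alpha e t x \<partial>M)"

definition FDP_star_e :: "(nat \<Rightarrow> nat) \<Rightarrow> (nat \<Rightarrow> 'a \<Rightarrow> real) \<Rightarrow> (nat \<Rightarrow> 'a \<Rightarrow> real) \<Rightarrow> nat \<Rightarrow> 'a \<Rightarrow> real" where
  "FDP_star_e theta alpha e t x =
     (\<Sum>j\<in>nulls theta t. alpha j x / (real (rejections alpha e (j - 1) x) + 1))"

end

theory Submission
  imports Defs
begin

lemma filt_facts:
  fixes M :: "'a measure" and e alpha :: "nat \<Rightarrow> 'a \<Rightarrow> real"
  assumes em: "\<And>t. e t \<in> borel_measurable M"
    and am: "\<And>t. t \<ge> 1 \<Longrightarrow> alpha t \<in> borel_measurable (filt M alpha e (t - 1))"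
  shows "space (filt M alpha e n) = space M"
    and "sets (filt M alpha e n) = sigma_sets (space M) {{x \<in> space M. decision alpha e j x} | j. j \<in> {1..n}}"
    and "\<forall>j\<in>{1..n}. {x \<in> space M. decision alpha e j x} \<in> sets M"
proof -
  have gen: "\<And>n. {{x \<in> space M. decision alpha e j x} | j. j \<in> {1..n}} \<subseteq> Pow (space M)" by auto
  show sp: "\<And>n. space (filt M alpha e n) = space M"
    unfolding filt_def by (simp add: space_measure_of_conv)
  show st: "\<And>n. sets (filt M alpha e n) = sigma_sets (space M) {{x \<in> space M. decision alpha e j x} | j. j \<in> {1..n}}"
    unfolding filt_def by (rule sets_measure_of[OF gen])
  show "\<forall>j\<in>{1..n}. {x \<in> space M. decision alpha e j x} \<in> sets M"
  proof (induction n)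
    case 0
    then show ?case by simp
  next
    case (Suc n)
    have "sets (filt M alpha e n) \<subseteq> sets M"
      unfolding st using Suc.IH by (intro sets.sigma_sets_subset) auto
    moreover have "alpha (Suc n) \<in> borel_measurable (filt M alpha e n)"
      using am[of "Suc n"] by simp
    ultimately have "alpha (Suc n) \<in> borel_measurable M"
      by (rule borel_measurable_subalgebra[OF _ sp])
    then have "{x \<in> space M. decision alpha e (Suc n) x} \<in> sets M"
      unfolding decision_def using em[of "Suc n"] by measurable
    then show ?case using Suc.IH by (auto simp: le_Suc_eq)
  qed
qed

lemma R_ge:
  assumes "1 \<le> j" "j \<le> t" "decision alpha e j x"
  shows "rejections alpha e (j - 1) x + 1 \<le> rejections alpha e t x"
proof -
  have sub: "insert j {i \<in> {1..j-1}. decision alpha e i x} \<subseteq> {i \<in> {1..t}. decision alpha e i x}"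
    using assms by auto
  have nj: "j \<notin> {i \<in> {1..j-1}. decision alpha e i x}" by auto
  have ci: "card (insert j {i \<in> {1..j-1}. decision alpha e i x}) = card {i \<in> {1..j-1}. decision alpha e i x} + 1"
    using nj by (subst card_insert_disjoint) auto
  have "card (insert j {i \<in> {1..j-1}. decision alpha e i x}) \<le> card {i \<in> {1..t}. decision alpha e i x}"
    using sub by (intro card_mono) auto
  then show ?thesis using ci unfolding rejections_def by linarith
qed

lemma term_le:
  assumes "1 \<le> j" "j \<le> t" "0 \<le> alpha j x" "0 \<le> e j x"
  shows "(if decision alpha e j x then 1 else 0) / max (real (rejections alpha e t x)) 1
     \<le> alpha j x * e j x / (real (rejections alpha e (j - 1) x) + 1)"
proof (cases "decision alpha e j x")
  case True
  then have a0: "alpha j x > 0" and ge: "e j x \<ge> 1 / alpha j x"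
    using assms unfolding decision_def by auto
  have "1 \<le> alpha j x * e j x" using ge a0 by (simp add: field_simps)
  moreover have "real (rejections alpha e (j - 1) x) + 1 \<le> max (real (rejections alpha e t x)) 1"
    using R_ge[OF assms(1,2) True] by linarith
  ultimately have "1 / max (real (rejections alpha e t x)) 1 \<le> alpha j x * e j x / (real (rejections alpha e (j - 1) x) + 1)"
    by (intro frac_le) auto
  then show ?thesis using True by simp
next
  case False
  then show ?thesis using assms by simp
qed


lemma rej_sum: "real (rejections alpha e n x) = (\<Sum>i\<in>{1..n}. if decision alpha e i x then 1 else 0)"
proof -
  have "{j \<in> {1..n}. decision alpha e j x} = {1..n} \<inter> {i. decision alpha e i x}" by auto
  then show ?thesis unfolding rejections_def by (simp add: sum.If_cases)
qed

theorem theorem1: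
  fixes M :: "'a measure" and a :: real
    and theta :: "nat \<Rightarrow> nat"
    and e alpha :: "nat \<Rightarrow> 'a \<Rightarrow> real"
  assumes "prob_space M"
    and "0 < a" "a < 1"
    and "\<And>t. e t \<in> borel_measurable M"
    and "\<And>t x. x \<in> space M \<Longrightarrow> 0 \<le> e t x"
    and "\<And>t x. x \<in> space M \<Longrightarrow> 0 \<le> alpha t x"
    and "\<And>t. t \<ge> 1 \<Longrightarrow> alpha t \<in> borel_measurable (filt M alpha e (t - 1))"
    and "\<And>t. t \<ge> 1 \<Longrightarrow> theta t = 0 \<Longrightarrow>
           AE x in M. nn_cond_exp M (filt M alpha e (t - 1)) (\<lambda>y. ennreal (e t y)) x \<le> 1"
    and "t \<ge> 1"
    and "(\<integral>\<^sup>+ x. ennreal (FDP_star_e theta alpha e t x) \<partial>M) \<le> ennreal a"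
  shows "FDR M theta alpha e t \<le> a"
proof -
  note em = assms(4) and e0 = assms(5) and a0 = assms(6) and am = assms(7) and ce = assms(8)
  interpret prob_space M by (rule assms(1))
  define F where "F n = filt M alpha e n" for n
  have ff1: "space (filt M alpha e n) = space M" for n
    using em am by (rule filt_facts(1))
  have ff2: "sets (filt M alpha e n) = sigma_sets (space M) {{x \<in> space M. decision alpha e j x} | j. j \<in> {1..n}}" for n
    using em am by (rule filt_facts(2))
  have ff3: "\<forall>j\<in>{1..n}. {x \<in> space M. decision alpha e j x} \<in> sets M" for n
    using em am by (rule filt_facts(3))
  have spF: "space (F n) = space M" for n unfolding F_def by (rule ff1)
  have subF: "sets (F n) \<subseteq> sets M" for n
    unfolding F_def ff2 using ff3 by (intro sets.sigma_sets_subset) auto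
  have DF: "{x \<in> space M. decision alpha e i x} \<in> sets (F n)" if "1 \<le> i" "i \<le> n" for i n
    unfolding F_def ff2 using that by (intro sigma_sets.Basic) auto
  have subalg: "subalgebra M (F n)" for n unfolding subalgebra_def using spF subF by auto
  have fms: "finite_measure_subalgebra M (F n)" for n
    unfolding finite_measure_subalgebra_def finite_measure_subalgebra_axioms_def
    using subalg finite_measure_axioms by auto
  have decF: "(\<lambda>x. if decision alpha e i x then 1 else 0 :: real) \<in> borel_measurable (F n)"
    if "1 \<le> i" "i \<le> n" for i n
  proof -
    have ind: "indicator {x \<in> space M. decision alpha e i x} \<in> borel_measurable (F n)"
      using DF[OF that] by (rule borel_measurable_indicator)
    have eq: "\<And>x. x \<in> space (F n) \<Longrightarrow> indicator {x \<in> space M. decision alpha e i x} x = (if decision alpha e i x then 1 else 0 :: real)"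
      using spF by (auto simp: indicator_def)
    show ?thesis
      by (rule measurable_cong[THEN iffD1, OF _ ind]) (rule eq)
  qed
  have RF: "(\<lambda>x. real (rejections alpha e n x)) \<in> borel_measurable (F n)" for n
    unfolding rej_sum by (intro borel_measurable_sum) (use decF in auto)
  have alF: "alpha j \<in> borel_measurable (F (j - 1))" if "1 \<le> j" for j
    unfolding F_def using am that .
  define g where "g j x = alpha j x / (real (rejections alpha e (j - 1) x) + 1)" for j x
  have gF: "g j \<in> borel_measurable (F (j - 1))" if "1 \<le> j" for j
  proof -
    have "(\<lambda>x. alpha j x / (real (rejections alpha e (j - 1) x) + 1)) \<in> borel_measurable (F (j - 1))"
      by (rule borel_measurable_divide[OF alF[OF that] borel_measurable_add[OF RF borel_measurable_const]])
    then show ?thesis unfolding g_def[abs_def] .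
  qed
  have gM: "g j \<in> borel_measurable M" if "1 \<le> j" for j
    by (rule borel_measurable_subalgebra[OF subF spF gF[OF that]])
  have g0: "0 \<le> g j x" if "x \<in> space M" for j x
    unfolding g_def using a0[OF that] by simp
  have fin: "finite (nulls theta t)" unfolding nulls_def by simp
  have nj: "1 \<le> j \<and> j \<le> t \<and> theta j = 0" if "j \<in> nulls theta t" for j
    using that unfolding nulls_def by auto
  have pw: "ennreal (FDP theta alpha e t x) \<le> (\<Sum>j\<in>nulls theta t. ennreal (g j x) * ennreal (e j x))"
    if x: "x \<in> space M" for x
  proof -
    have "FDP theta alpha e t x \<le> (\<Sum>j\<in>nulls theta t. g j x * e j x)"
      unfolding FDP_def sum_divide_distrib
      apply (intro sum_mono)
      using term_le[of _ t alpha x e] nj a0[OF x] e0[OF x] unfolding g_def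
      by (auto simp: field_simps)
    then have "ennreal (FDP theta alpha e t x) \<le> ennreal (\<Sum>j\<in>nulls theta t. g j x * e j x)"
      by (rule ennreal_leI)
    also have "\<dots> = (\<Sum>j\<in>nulls theta t. ennreal (g j x) * ennreal (e j x))"
      using g0[OF x] e0[OF x] by (simp add: sum_ennreal[symmetric] ennreal_mult)
    finally show ?thesis .
  qed
  have "(\<integral>\<^sup>+ x. ennreal (FDP theta alpha e t x) \<partial>M)
      \<le> (\<integral>\<^sup>+ x. (\<Sum>j\<in>nulls theta t. ennreal (g j x) * ennreal (e j x)) \<partial>M)"
    by (intro nn_integral_mono) (use pw in auto)
  also have "\<dots> = (\<Sum>j\<in>nulls theta t. \<integral>\<^sup>+ x. ennreal (g j x) * ennreal (e j x) \<partial>M)"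
    by (intro nn_integral_sum) (use gM em nj in auto)
  also have "\<dots> \<le> (\<Sum>j\<in>nulls theta t. \<integral>\<^sup>+ x. ennreal (g j x) \<partial>M)"
  proof (intro sum_mono)
    fix j assume j: "j \<in> nulls theta t"
    interpret S: finite_measure_subalgebra M "F (j - 1)" by (rule fms)
    have "(\<integral>\<^sup>+ x. ennreal (g j x) * ennreal (e j x) \<partial>M)
        = (\<integral>\<^sup>+ x. ennreal (g j x) * nn_cond_exp M (F (j - 1)) (\<lambda>y. ennreal (e j y)) x \<partial>M)"
      by (rule S.nn_cond_exp_intg[symmetric]) (use gF em nj j in auto)
    also have "\<dots> \<le> (\<integral>\<^sup>+ x. ennreal (g j x) \<partial>M)"
    proof (intro nn_integral_mono_AE)
      show "AE x in M. ennreal (g j x) * nn_cond_exp M (F (j - 1)) (\<lambda>y. ennreal (e j y)) x \<le> ennreal (g j x)"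
      proof -
        have "AE x in M. nn_cond_exp M (F (j - 1)) (\<lambda>y. ennreal (e j y)) x \<le> 1"
          using ce[of j] nj[OF j] unfolding F_def by simp
        then show ?thesis
          by eventually_elim (rule mult_left_le, auto)
      qed
    qed
    finally show "(\<integral>\<^sup>+ x. ennreal (g j x) * ennreal (e j x) \<partial>M) \<le> (\<integral>\<^sup>+ x. ennreal (g j x) \<partial>M)" .
  qed
  also have "\<dots> = (\<integral>\<^sup>+ x. (\<Sum>j\<in>nulls theta t. ennreal (g j x)) \<partial>M)"
    by (intro nn_integral_sum[symmetric]) (use gM nj in auto)
  also have "\<dots> = (\<integral>\<^sup>+ x. ennreal (FDP_star_e theta alpha e t x) \<partial>M)"
  proof (intro nn_integral_cong)
    fix x assume x: "x \<in> space M"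
    have "FDP_star_e theta alpha e t x = (\<Sum>j\<in>nulls theta t. g j x)"
      unfolding FDP_star_e_def g_def ..
    then show "(\<Sum>j\<in>nulls theta t. ennreal (g j x)) = ennreal (FDP_star_e theta alpha e t x)"
      using g0[OF x] by (simp add: sum_ennreal)
  qed
  also have "\<dots> \<le> ennreal a" by (rule assms(10))
  finally show ?thesis unfolding FDR_def
    by (intro integral_real_bounded) (use assms(2) in auto)
qed

end
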